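(* Let $\mathbb{F}$ be an archimedean partially ordered field. Then $\mathbb{F}$ is localizable and the extended Gelfand transformation $\widehat{\cdot}\colon\mathbb{F}\to\mathscr{C}_{\mathrm{a.e.}}(\mathcal{K}(\mathbb{F}))$ is a positive ring morphism and an order embedding.
   Context: All rings are commutative with unit $1$; ring morphisms are unital. A partially ordered commutative ring is a commutative ring $R$ with a partial order $\le$ such that $r\le s$ implies $r+t\le s+t$, and whose positive cone $R^+=\{r:0\le r\}$ is closed under multiplication and contains all squares. A partially ordered field is a partially ordered commutative ring in which every nonzero element is invertible. A ring morphism $\Phi$ is positive if $\Phi(R^+)\subseteq S^+$, an order embedding if it is positive and $\Phi^{-1}(S^+)\subseteq R^+$. $\mathbb{N}=\{1,2,\dots\}$, $\mathbb{N}_0=\mathbb{N}\cup\{0\}$. $R$ is archimedean if $kg+h\in R^+$ for all $k\in\mathbb{N}$ implies $g\in R^+$. $\mathrm{Loc}(R)$ is the set of $s\in1+R^+$ such that $rs\in R^+$ implies $r\in R^+$ for all $r\in R$; $R$ is localizable if every $r$ satisfies $-s\le r\le s$ for some $s\in\mathrm{Loc}(R)$. For a topological space $X$: $\mathscr{C}_{\mathrm{a.e.}}(X)$ is the set of continuous real functions defined on dense open subsets of $X$ modulo $f\approx g$ iff $f,g$ agree on some dense open subset of $\operatorname{dom}f\cap\operatorname{dom}g$, with operations pointwise on the intersection of domains, and order $[f]\le[g]$ iff $f\le g$ pointwise on some dense open subset of $\operatorname{dom}f\cap\operatorname{dom}g$. $R_{\mathrm{loc}}$: fractions $r/s$ ($r\in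 R$, $s\in\mathrm{Loc}(R)$), $r/s=r'/s'$ iff $rs'=r's$, usual operations, $p/q\le r/s$ iff $ps\le rq$. $R^{\mathrm{bd}}_{\mathrm{loc}}=\{a\in R_{\mathrm{loc}}:\exists n\in\mathbb{N}_0,\ -n\le a\le n\}$. $\mathcal{K}(R)$: the ring morphisms $\varphi\colon R^{\mathrm{bd}}_{\mathrm{loc}}\to\mathbb{R}$ with $\varphi(a)\ge0$ for $a\ge0$, with the weak-$*$ topology. $\mathrm{O}_{s<\infty}=\{\varphi\in\mathcal{K}(R):\varphi(1/s)>0\}$ for $s\in\mathrm{Loc}(R)$; for archimedean localizable $R$ these are dense open subsets of $\mathcal{K}(R)$. The extended Gelfand transformation sends $r\in R$ to the class $\widehat r\in\mathscr{C}_{\mathrm{a.e.}}(\mathcal{K}(R))$ of the continuous function $r_s\colon\mathrm{O}_{s<\infty}\to\mathbb{R}$, $\varphi\mapsto\varphi(1/s)^{-1}\varphi(r/s)$, where $s\in\mathrm{Loc}(R)$ is any element with $r/s\in R^{\mathrm{bd}}_{\mathrm{loc}}$ (the class does not depend on $s$). *)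

theory Defs
  imports "HOL-Analysis.Analysis"
begin

definition po_comm_ring :: "('a::comm_ring_1 \<Rightarrow> 'a \<Rightarrow> bool) \<Rightarrow> bool" where
  "po_comm_ring le \<longleftrightarrow>
     (\<forall>x. le x x) \<and> (\<forall>x y. le x y \<longrightarrow> le y x \<longrightarrow> x = y) \<and>
     (\<forall>x y z. le x y \<longrightarrow> le y z \<longrightarrow> le x z) \<and>
     (\<forall>r s t. le r s \<longrightarrow> le (r + t) (s + t)) \<and>
     (\<forall>a b. le 0 a \<longrightarrow> le 0 b \<longrightarrow> le 0 (a * b)) \<and>
     (\<forall>a. le 0 (a * a))"

definition po_field :: "('a::field \<Rightarrow> 'a \<Rightarrow> bool) \<Rightarrow> bool" where
  "po_field le \<longleftrightarrow> po_comm_ring le"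

definition archimedean_po :: "('a::comm_ring_1 \<Rightarrow> 'a \<Rightarrow> bool) \<Rightarrow> bool" where
  "archimedean_po le \<longleftrightarrow>
     (\<forall>g h. (\<forall>k::nat. k \<ge> 1 \<longrightarrow> le 0 (of_nat k * g + h)) \<longrightarrow> le 0 g)"

definition Loc :: "('a::comm_ring_1 \<Rightarrow> 'a \<Rightarrow> bool) \<Rightarrow> 'a set" where
  "Loc le = {s. le 0 (s - 1) \<and> (\<forall>r. le 0 (r * s) \<longrightarrow> le 0 r)}"

definition localizable :: "('a::comm_ring_1 \<Rightarrow> 'a \<Rightarrow> bool) \<Rightarrow> bool" where
  "localizable le \<longleftrightarrow> (\<forall>r. \<exists>s\<in>Loc le. le (- s) r \<and> le r s)"

section \<open>Localization: a fraction r/s is represented by the pair (r,s) with s in Loc\<close>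

definition loc_eq :: "'a::comm_ring_1 \<times> 'a \<Rightarrow> 'a \<times> 'a \<Rightarrow> bool" where
  "loc_eq a b \<longleftrightarrow> fst a * snd b = fst b * snd a"

definition loc_le :: "('a::comm_ring_1 \<Rightarrow> 'a \<Rightarrow> bool) \<Rightarrow> 'a \<times> 'a \<Rightarrow> 'a \<times> 'a \<Rightarrow> bool" where
  "loc_le le a b \<longleftrightarrow> le (fst a * snd b) (fst b * snd a)"

definition loc_add :: "'a::comm_ring_1 \<times> 'a \<Rightarrow> 'a \<times> 'a \<Rightarrow> 'a \<times> 'a" where
  "loc_add a b = (fst a * snd b + fst b * snd a, snd a * snd b)"

definition loc_mult :: "'a::comm_ring_1 \<times> 'a \<Rightarrow> 'a \<times> 'a \<Rightarrow> 'a \<times> 'a" where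
  "loc_mult a b = (fst a * fst b, snd a * snd b)"

text \<open>Representatives of elements of the bounded part of R_loc.\<close>
definition Loc_bd :: "('a::comm_ring_1 \<Rightarrow> 'a \<Rightarrow> bool) \<Rightarrow> ('a \<times> 'a) set" where
  "Loc_bd le = {a. snd a \<in> Loc le \<and>
      (\<exists>n::nat. loc_le le (- of_nat n, 1) a \<and> loc_le le a (of_nat n, 1))}"

text \<open>A character is represented as a real function on the representatives of
  bounded fractions (extensional outside), respecting equality of fractions.\<close>
definition Kset :: "('a::comm_ring_1 \<Rightarrow> 'a \<Rightarrow> bool) \<Rightarrow> ('a \<times> 'a \<Rightarrow> real) set" where
  "Kset le = {\<phi> \<in> Loc_bd le \<rightarrow>\<^sub>E (UNIV :: real set).
      (\<forall>a\<in>Loc_bd le. \<forall>b\<in>Loc_bd le. loc_eq a b \<longrightarrow> \<phi> a = \<phi> b) \<and>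
      (\<forall>a\<in>Loc_bd le. \<forall>b\<in>Loc_bd le. \<phi> (loc_add a b) = \<phi> a + \<phi> b) \<and>
      (\<forall>a\<in>Loc_bd le. \<forall>b\<in>Loc_bd le. \<phi> (loc_mult a b) = \<phi> a * \<phi> b) \<and>
      \<phi> (1, 1) = 1 \<and>
      (\<forall>a\<in>Loc_bd le. loc_le le (0, 1) a \<longrightarrow> \<phi> a \<ge> 0)}"

definition Ktop :: "('a::comm_ring_1 \<Rightarrow> 'a \<Rightarrow> bool) \<Rightarrow> ('a \<times> 'a \<Rightarrow> real) topology" where
  "Ktop le = subtopology (product_topology (\<lambda>_. euclideanreal) (Loc_bd le)) (Kset le)"

definition O_fin :: "('a::comm_ring_1 \<Rightarrow> 'a \<Rightarrow> bool) \<Rightarrow> 'a \<Rightarrow> ('a \<times> 'a \<Rightarrow> real) set" where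
  "O_fin le s = {\<phi> \<in> Kset le. \<phi> (1, s) > 0}"

section \<open>C_a.e.(X): partial continuous functions on dense open sets, as pairs (domain, function)\<close>

definition dense_open :: "'b topology \<Rightarrow> 'b set \<Rightarrow> bool" where
  "dense_open X U \<longleftrightarrow> openin X U \<and> X closure_of U = topspace X"

definition cae :: "'b topology \<Rightarrow> ('b set \<times> ('b \<Rightarrow> real)) set" where
  "cae X = {(U, f). dense_open X U \<and> continuous_map (subtopology X U) euclideanreal f}"

definition cae_eq :: "'b topology \<Rightarrow> 'b set \<times> ('b \<Rightarrow> real) \<Rightarrow> 'b set \<times> ('b \<Rightarrow> real) \<Rightarrow> bool" where
  "cae_eq X F G \<longleftrightarrow> (\<exists>W. dense_open X W \<and> W \<subseteq> fst F \<inter> fst G \<and> (\<forall>x\<in>W. snd F x = snd G x))"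

definition cae_le :: "'b topology \<Rightarrow> 'b set \<times> ('b \<Rightarrow> real) \<Rightarrow> 'b set \<times> ('b \<Rightarrow> real) \<Rightarrow> bool" where
  "cae_le X F G \<longleftrightarrow> (\<exists>W. dense_open X W \<and> W \<subseteq> fst F \<inter> fst G \<and> (\<forall>x\<in>W. snd F x \<le> snd G x))"

definition cae_add :: "'b set \<times> ('b \<Rightarrow> real) \<Rightarrow> 'b set \<times> ('b \<Rightarrow> real) \<Rightarrow> 'b set \<times> ('b \<Rightarrow> real)" where
  "cae_add F G = (fst F \<inter> fst G, \<lambda>x. snd F x + snd G x)"

definition cae_mult :: "'b set \<times> ('b \<Rightarrow> real) \<Rightarrow> 'b set \<times> ('b \<Rightarrow> real) \<Rightarrow> 'b set \<times> ('b \<Rightarrow> real)" where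
  "cae_mult F G = (fst F \<inter> fst G, \<lambda>x. snd F x * snd G x)"

definition cae_const :: "'b topology \<Rightarrow> real \<Rightarrow> 'b set \<times> ('b \<Rightarrow> real)" where
  "cae_const X c = (topspace X, \<lambda>_. c)"

section \<open>Extended Gelfand transformation (a representative of the class)\<close>

definition gelfand_rep :: "('a::comm_ring_1 \<Rightarrow> 'a \<Rightarrow> bool) \<Rightarrow> 'a \<Rightarrow> 'a \<Rightarrow> ('a \<times> 'a \<Rightarrow> real) set \<times> (('a \<times> 'a \<Rightarrow> real) \<Rightarrow> real)" where
  "gelfand_rep le s r = (O_fin le s, \<lambda>\<phi>. inverse (\<phi> (1, s)) * \<phi> (r, s))"

definition gelfand :: "('a::comm_ring_1 \<Rightarrow> 'a \<Rightarrow> bool) \<Rightarrow> 'a \<Rightarrow> ('a \<times> 'a \<Rightarrow> real) set \<times> (('a \<times> 'a \<Rightarrow> real) \<Rightarrow> real)" where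
  "gelfand le r = gelfand_rep le (SOME s. s \<in> Loc le \<and> (r, s) \<in> Loc_bd le) r"

end

theory Submission imports Defs begin

definition pcone :: "'a::field set \<Rightarrow> bool" where
 "pcone C \<longleftrightarrow> (\<forall>x\<in>C. \<forall>y\<in>C. x + y \<in> C) \<and> (\<forall>x\<in>C. \<forall>y\<in>C. x * y \<in> C) \<and> (\<forall>x. x * x \<in> C) \<and> -1 \<notin> C"

definition emb :: "rat \<Rightarrow> 'a::field" where
 "emb q = (case quotient_of q of (p, d) \<Rightarrow> of_int p / of_int d)"

definition bdd :: "'a::field set \<Rightarrow> 'a \<Rightarrow> bool" where
 "bdd C x \<longleftrightarrow> (\<exists>n::nat. x + of_nat n \<in> C \<and> of_nat n - x \<in> C)"

locale pc = fixes C :: "'a::field set" assumes pc: "pcone C"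
begin

lemma add: "x \<in> C \<Longrightarrow> y \<in> C \<Longrightarrow> x + y \<in> C" using pc unfolding pcone_def by blast
lemma mult: "x \<in> C \<Longrightarrow> y \<in> C \<Longrightarrow> x * y \<in> C" using pc unfolding pcone_def by blast
lemma sq: "x * x \<in> C" using pc unfolding pcone_def by blast
lemma m1: "-1 \<notin> C" using pc unfolding pcone_def by blast
lemma zero: "0 \<in> C" using sq[of 0] by simp
lemma one: "1 \<in> C" using sq[of 1] by simp
lemma of_nat: "of_nat n \<in> C"
  by (induction n) (auto simp: zero one add)
lemma of_nat_nz: "n > 0 \<Longrightarrow> of_nat n \<noteq> (0::'a)"
proof
  assume "n > 0" "of_nat n = (0::'a)"
  then obtain m where "n = Suc m" by (cases n) auto
  then have "of_nat m = (-1::'a)" using \<open>of_nat n = 0\<close> by (simp add: eq_neg_iff_add_eq_0 add.commute)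
  then show False using of_nat[of m] m1 by simp
qed
lemma of_int_nz: "n \<noteq> 0 \<Longrightarrow> of_int n \<noteq> (0::'a)"
proof (cases "n > 0")
  case True
  then show ?thesis using of_nat_nz[of "nat n"] by simp
next
  case False
  assume "n \<noteq> 0"
  then have "nat (-n) > 0" using False by simp
  then show ?thesis using of_nat_nz[of "nat (-n)"] False by simp
qed
lemma inv: "x \<in> C \<Longrightarrow> inverse x \<in> C"
proof -
  assume "x \<in> C"
  have "inverse x = x * (inverse x * inverse x)"
    by (cases "x = 0") (simp_all add: field_simps)
  then show ?thesis using mult[OF \<open>x \<in> C\<close> sq[of "inverse x"]] by argo
qed
lemma antisym: "x \<in> C \<Longrightarrow> -x \<in> C \<Longrightarrow> x = 0"
proof (rule ccontr)
  assume a: "x \<in> C" "-x \<in> C" "x \<noteq> 0"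
  have "-x * inverse x = -1" using a(3) by simp
  moreover have "-x * inverse x \<in> C" using mult[OF a(2) inv[OF a(1)]] .
  ultimately show False using m1 by simp
qed

lemma emb_frac:
  assumes "d \<noteq> 0" "q = of_int p / of_int d"
  shows "emb q = (of_int p / of_int d :: 'a)"
proof -
  obtain p' d' where qd: "quotient_of q = (p', d')" by (cases "quotient_of q") auto
  have d'0: "d' > 0" using quotient_of_denom_pos[OF qd] .
  have "q = of_int p' / of_int d'" using quotient_of_div[OF qd] .
  with assms have "(of_int p' / of_int d' :: rat) = of_int p / of_int d" by simp
  then have "(of_int p' * of_int d :: rat) = of_int p * of_int d'"
    using assms(1) d'0 by (simp add: frac_eq_eq)
  then have e: "p' * d = p * d'" by (simp flip: of_int_mult)
  have "(of_int p' * of_int d :: 'a) = of_int p * of_int d'"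
    by (simp add: e flip: of_int_mult)
  then have "(of_int p' / of_int d' :: 'a) = of_int p / of_int d"
    using of_int_nz[OF assms(1)] of_int_nz[of d'] d'0 by (simp add: frac_eq_eq)
  then show ?thesis using qd by (simp add: emb_def)
qed

lemma rat_frac: obtains p d where "d > 0" "(q::rat) = of_int p / of_int d"
proof -
  obtain p d where qd: "quotient_of q = (p, d)" by (cases "quotient_of q") auto
  show ?thesis using that[OF quotient_of_denom_pos[OF qd] quotient_of_div[OF qd]] .
qed

lemma emb_of_int: "emb (of_int n) = (of_int n :: 'a)"
  using emb_frac[of 1 "of_int n" n] by simp
lemma emb_of_nat: "emb (of_nat n) = (of_nat n :: 'a)"
  using emb_of_int[of "int n"] by simp
lemma emb_0: "emb 0 = (0::'a)" using emb_of_int[of 0] by simp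
lemma emb_1: "emb 1 = (1::'a)" using emb_of_int[of 1] by simp

lemma emb_add: "emb (q + r) = (emb q + emb r :: 'a)"
proof -
  obtain p d where pd: "d > 0" "q = of_int p / of_int d" by (rule rat_frac)
  obtain p' d' where pd': "d' > 0" "r = of_int p' / of_int d'" by (rule rat_frac)
  have "q + r = of_int (p * d' + p' * d) / of_int (d * d')"
    using pd pd' by (simp add: field_simps)
  then have "emb (q + r) = (of_int (p * d' + p' * d) / of_int (d * d') :: 'a)"
    using pd pd' by (intro emb_frac) auto
  also have "\<dots> = of_int p / of_int d + of_int p' / of_int d'"
    using of_int_nz[of d] of_int_nz[of d'] pd pd' by (simp add: field_simps)
  finally show ?thesis using emb_frac[OF _ pd(2)] emb_frac[OF _ pd'(2)] pd pd' by simp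
qed

lemma emb_mult: "emb (q * r) = (emb q * emb r :: 'a)"
proof -
  obtain p d where pd: "d > 0" "q = of_int p / of_int d" by (rule rat_frac)
  obtain p' d' where pd': "d' > 0" "r = of_int p' / of_int d'" by (rule rat_frac)
  have "q * r = of_int (p * p') / of_int (d * d')"
    unfolding pd pd' by simp
  then have "emb (q * r) = (of_int (p * p') / of_int (d * d') :: 'a)"
    using pd pd' by (intro emb_frac) auto
  also have "\<dots> = of_int p / of_int d * (of_int p' / of_int d')"
    using of_int_nz[of d] of_int_nz[of d'] pd pd' by (simp add: field_simps)
  finally show ?thesis using emb_frac[OF _ pd(2)] emb_frac[OF _ pd'(2)] pd pd' by simp
qed

lemma emb_minus: "emb (- q) = (- emb q :: 'a)"
  using emb_add[of q "-q"] emb_0 by (simp add: eq_neg_iff_add_eq_0 add.commute)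
lemma emb_diff: "emb (q - r) = (emb q - emb r :: 'a)"
  using emb_add[of q "-r"] emb_minus[of r] by simp

lemma emb_nonneg: "q \<ge> 0 \<Longrightarrow> (emb q :: 'a) \<in> C"
proof -
  assume q: "q \<ge> 0"
  obtain p d where pd: "d > 0" "q = of_int p / of_int d" by (rule rat_frac)
  have "p \<ge> 0" using q pd by (simp add: zero_le_divide_iff)
  have "emb q = (of_int p * inverse (of_int d) :: 'a)" using emb_frac[OF _ pd(2)] pd(1) by (simp add: field_simps)
  moreover have "(of_int p :: 'a) \<in> C" using of_nat[of "nat p"] \<open>p \<ge> 0\<close> by simp
  moreover have "(of_int d :: 'a) \<in> C" using of_nat[of "nat d"] pd(1) by simp
  ultimately show ?thesis using mult inv by simp
qed

lemma emb_eq0: "emb q = (0::'a) \<Longrightarrow> q = 0"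
proof -
  assume e: "emb q = (0::'a)"
  obtain p d where pd: "d > 0" "q = of_int p / of_int d" by (rule rat_frac)
  have "(of_int p / of_int d :: 'a) = 0" using e emb_frac[OF _ pd(2)] pd(1) by simp
  then have "p = 0" using of_int_nz[of d] of_int_nz[of p] pd(1) by auto
  then show ?thesis using pd by simp
qed

lemma emb_le: "q \<le> r \<Longrightarrow> (emb r - emb q :: 'a) \<in> C"
  using emb_nonneg[of "r - q"] emb_diff by simp

lemma emb_strict: "q < r \<Longrightarrow> (emb q - emb r :: 'a) \<notin> C"
proof
  assume a: "q < r" "(emb q - emb r :: 'a) \<in> C"
  have "(emb r - emb q :: 'a) \<in> C" using emb_le a(1) by simp
  then have "(emb r - emb q :: 'a) = 0" using antisym a(2) by (metis minus_diff_eq)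
  then have "emb (r - q) = (0::'a)" by (simp add: emb_diff)
  then have "r - q = 0" by (rule emb_eq0)
  then show False using a(1) by simp
qed

lemma emb_mono_iff: "(emb r - emb q :: 'a) \<in> C \<longleftrightarrow> q \<le> r"
  using emb_le emb_strict by (meson not_le)

lemma bdd_add: "bdd C x \<Longrightarrow> bdd C y \<Longrightarrow> bdd C (x + y)"
proof -
  assume "bdd C x" "bdd C y"
  then obtain n m :: nat where nm: "x + of_nat n \<in> C" "of_nat n - x \<in> C" "y + of_nat m \<in> C" "of_nat m - y \<in> C"
    unfolding bdd_def by blast
  have "x + y + of_nat (n + m) = (x + of_nat n) + (y + of_nat m)" by simp
  moreover have "of_nat (n + m) - (x + y) = (of_nat n - x) + (of_nat m - y)" by simp
  ultimately show ?thesis unfolding bdd_def using nm add by metis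
qed

lemma bdd_neg: "bdd C x \<Longrightarrow> bdd C (- x)"
  unfolding bdd_def by (simp add: add.commute, blast)

lemma bdd_diff: "bdd C x \<Longrightarrow> bdd C y \<Longrightarrow> bdd C (x - y)"
  using bdd_add[of x "- y"] bdd_neg[of y] by simp

lemma bdd_mult: "bdd C x \<Longrightarrow> bdd C y \<Longrightarrow> bdd C (x * y)"
proof -
  assume "bdd C x" "bdd C y"
  then obtain n m :: nat where nm: "x + of_nat n \<in> C" "of_nat n - x \<in> C" "y + of_nat m \<in> C" "of_nat m - y \<in> C"
    unfolding bdd_def by blast
  define N where "N = (of_nat n :: 'a)"
  define M where "M = (of_nat m :: 'a)"
  have NM: "N \<in> C" "M \<in> C" unfolding N_def M_def by (simp_all add: of_nat)
  have "x * y + of_nat (3 * n * m) = (N - x) * (M - y) + N * (y + M) + M * (x + N)"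
    unfolding N_def M_def by (simp add: algebra_simps)
  moreover have "(N - x) * (M - y) + N * (y + M) + M * (x + N) \<in> C"
    using nm NM unfolding N_def[symmetric] M_def[symmetric] by (meson add mult)
  moreover have "of_nat (3 * n * m) - x * y = (N - x) * (M + y) + N * (M - y) + M * (N + x)"
    unfolding N_def M_def by (simp add: algebra_simps)
  moreover have "(N - x) * (M + y) + N * (M - y) + M * (N + x) \<in> C"
    using nm NM unfolding N_def[symmetric] M_def[symmetric] by (metis add mult add.commute)
  ultimately show ?thesis unfolding bdd_def by metis
qed

lemma bdd_of_nat: "bdd C (of_nat n)"
  unfolding bdd_def using of_nat[of "n+n"] zero by (intro exI[of _ n]) auto

lemma bdd_emb: "bdd C (emb q)"
proof -
  obtain n :: nat where "\<bar>q\<bar> < of_nat n" using reals_Archimedean2 by blast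
  then have "q + of_nat n \<ge> 0" "of_nat n - q \<ge> 0" by linarith+
  then have "emb (q + of_nat n) \<in> C" "emb (of_nat n - q) \<in> C" using emb_nonneg by blast+
  then show ?thesis unfolding bdd_def by (auto simp: emb_add emb_diff emb_of_nat)
qed

end

definition st :: "'a::field set \<Rightarrow> 'a \<Rightarrow> real" where
  "st C x = Sup {real_of_rat q | q. x - emb q \<in> C}"

locale tc = pc + assumes total: "x \<in> C \<or> - x \<in> C"
begin

lemma S_props:
  assumes "bdd C x"
  shows "{real_of_rat q | q. x - emb q \<in> C} \<noteq> {}" "bdd_above {real_of_rat q | q. x - emb q \<in> C}"
proof -
  obtain n :: nat where n: "x + of_nat n \<in> C" "of_nat n - x \<in> C" using assms unfolding bdd_def by blast
  have "x - emb (- of_nat n) \<in> C" using n by (simp add: emb_minus emb_of_nat)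
  then show "{real_of_rat q | q. x - emb q \<in> C} \<noteq> {}" by blast
  have "real_of_rat q \<le> of_nat n" if "x - emb q \<in> C" for q
  proof -
    have "(of_nat n - x) + (x - emb q) \<in> C" using add n(2) that by blast
    then have "emb (of_nat n) - emb q \<in> C" by (simp add: emb_of_nat)
    then have "q \<le> of_nat n" using emb_mono_iff by blast
    then show ?thesis by (metis of_rat_less_eq of_rat_of_nat_eq)
  qed
  then show "bdd_above {real_of_rat q | q. x - emb q \<in> C}" unfolding bdd_above_def by blast
qed

lemma st_ge: "bdd C x \<Longrightarrow> x - emb q \<in> C \<Longrightarrow> real_of_rat q \<le> st C x"
  unfolding st_def by (rule cSup_upper) (auto dest: S_props)

lemma st_le: assumes "bdd C x" "emb q - x \<in> C" shows "st C x \<le> real_of_rat q"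
  unfolding st_def
proof (rule cSup_least)
  show "{real_of_rat q | q. x - emb q \<in> C} \<noteq> {}" using S_props[OF assms(1)] by blast
  fix y assume "y \<in> {real_of_rat q | q. x - emb q \<in> C}"
  then obtain q' where q': "y = real_of_rat q'" "x - emb q' \<in> C" by blast
  have "(emb q - x) + (x - emb q') \<in> C" using add assms(2) q'(2) by blast
  then have "emb q - emb q' \<in> C" by simp
  then have "q' \<le> q" using emb_mono_iff by blast
  then show "y \<le> real_of_rat q" using q'(1) by (simp add: of_rat_less_eq)
qed

lemma st_lt_imp: assumes "bdd C x" "real_of_rat q < st C x" shows "x - emb q \<in> C"
proof (rule ccontr)
  assume "x - emb q \<notin> C"
  then have "emb q - x \<in> C" using total[of "x - emb q"] by simp
  then show False using st_le[OF assms(1)] assms(2) by force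
qed

lemma st_gt_imp: assumes "bdd C x" "st C x < real_of_rat q" shows "emb q - x \<in> C"
proof (rule ccontr)
  assume "emb q - x \<notin> C"
  then have "x - emb q \<in> C" using total[of "emb q - x"] by simp
  then show False using st_ge[OF assms(1)] assms(2) by force
qed

lemma st_geI: assumes "bdd C x" "\<And>q. real_of_rat q < r \<Longrightarrow> x - emb q \<in> C" shows "r \<le> st C x"
proof (rule ccontr)
  assume "\<not> r \<le> st C x"
  then obtain q where "st C x < real_of_rat q" "real_of_rat q < r" using of_rat_dense[of "st C x" r] by auto
  then show False using st_ge[OF assms(1) assms(2)] by force
qed

lemma st_leI: assumes "bdd C x" "\<And>q. r < real_of_rat q \<Longrightarrow> emb q - x \<in> C" shows "st C x \<le> r"
proof (rule ccontr)
  assume "\<not> st C x \<le> r"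
  then obtain q where "r < real_of_rat q" "real_of_rat q < st C x" using of_rat_dense[of r "st C x"] by auto
  then show False using st_le[OF assms(1) assms(2)] by force
qed

lemma st_emb: "st C (emb q) = real_of_rat q"
  using st_ge[OF bdd_emb, of q q] st_le[OF bdd_emb, of q q] zero by simp

lemma st_of_nat: "st C (of_nat n) = real n"
  using st_emb[of "of_nat n"] by (simp add: emb_of_nat)

lemma st_nonneg: "bdd C x \<Longrightarrow> x \<in> C \<Longrightarrow> 0 \<le> st C x"
  using st_ge[of x 0] by (simp add: emb_0)

lemma st_add: assumes "bdd C x" "bdd C y" shows "st C (x + y) = st C x + st C y"
proof (rule order.antisym)
  show "st C x + st C y \<le> st C (x + y)"
  proof (rule st_geI[OF bdd_add[OF assms]])
    fix q assume q: "real_of_rat q < st C x + st C y"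
    obtain q1 where q1: "real_of_rat q - st C y < real_of_rat q1" "real_of_rat q1 < st C x"
      using of_rat_dense[of "real_of_rat q - st C y" "st C x"] q by auto
    have "real_of_rat (q - q1) < st C y" using q1 by (simp add: of_rat_diff)
    then have "y - emb (q - q1) \<in> C" using st_lt_imp[OF assms(2)] by blast
    moreover have "x - emb q1 \<in> C" using st_lt_imp[OF assms(1) q1(2)] .
    ultimately have "(x - emb q1) + (y - emb (q - q1)) \<in> C" using add by blast
    then show "x + y - emb q \<in> C" by (simp add: emb_diff algebra_simps)
  qed
  show "st C (x + y) \<le> st C x + st C y"
  proof (rule st_leI[OF bdd_add[OF assms]])
    fix q assume q: "st C x + st C y < real_of_rat q"
    obtain q1 where q1: "st C x < real_of_rat q1" "real_of_rat q1 < real_of_rat q - st C y"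
      using of_rat_dense[of "st C x" "real_of_rat q - st C y"] q by auto
    have "st C y < real_of_rat (q - q1)" using q1 by (simp add: of_rat_diff)
    then have "emb (q - q1) - y \<in> C" using st_gt_imp[OF assms(2)] by blast
    moreover have "emb q1 - x \<in> C" using st_gt_imp[OF assms(1) q1(1)] .
    ultimately have "(emb q1 - x) + (emb (q - q1) - y) \<in> C" using add by blast
    then show "emb q - (x + y) \<in> C" by (simp add: emb_diff algebra_simps)
  qed
qed

lemma st_mult_nonneg:
  assumes "bdd C x" "bdd C y" "x \<in> C" "y \<in> C"
  shows "st C (x * y) = st C x * st C y"
proof (rule order.antisym)
  have a0: "0 \<le> st C x" and b0: "0 \<le> st C y" using st_nonneg assms by auto
  show "st C x * st C y \<le> st C (x * y)"
  proof (rule st_geI[OF bdd_mult[OF assms(1,2)]])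
    fix q assume q: "real_of_rat q < st C x * st C y"
    show "x * y - emb q \<in> C"
    proof (cases "q \<le> 0")
      case True
      then have "emb (- q) \<in> C" using emb_nonneg by simp
      then have "x * y + emb (- q) \<in> C" using add[OF mult[OF assms(3,4)]] by blast
      then show ?thesis by (simp add: emb_minus)
    next
      case False
      then have qp: "0 < real_of_rat q" by simp
      then have "0 < st C x * st C y" using q by linarith
      then have ap: "0 < st C x" and bp: "0 < st C y" using a0 b0
        by (auto simp: zero_less_mult_iff)
      have "real_of_rat q / st C y < st C x" using q bp by (simp add: divide_less_eq)
      then obtain q1 where q1: "real_of_rat q / st C y < real_of_rat q1" "real_of_rat q1 < st C x"
        using of_rat_dense by blast
      have q1p: "0 < q1" using q1(1) qp bp
        by (metis divide_pos_pos order.strict_trans of_rat_less_0_iff not_less_iff_gr_or_eq zero_less_of_rat_iff)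
      have "real_of_rat q < real_of_rat q1 * st C y" using q1(1) bp by (simp add: divide_less_eq)
      then have "real_of_rat (q / q1) < st C y" using q1p by (simp add: of_rat_divide divide_less_eq mult.commute)
      then have y2: "y - emb (q / q1) \<in> C" using st_lt_imp[OF assms(2)] by blast
      have x1: "x - emb q1 \<in> C" using st_lt_imp[OF assms(1) q1(2)] .
      have e1: "emb q1 \<in> C" using emb_nonneg q1p by simp
      have "(x - emb q1) * y + emb q1 * (y - emb (q / q1)) \<in> C"
        using add mult x1 y2 e1 assms(4) by blast
      moreover have "emb q = (emb q1 * emb (q / q1) :: 'a)" using q1p emb_mult[of q1 "q / q1"] by simp
      ultimately show ?thesis by (simp add: algebra_simps)
    qed
  qed
  show "st C (x * y) \<le> st C x * st C y"
  proof (rule st_leI[OF bdd_mult[OF assms(1,2)]])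
    fix q assume q: "st C x * st C y < real_of_rat q"
    have qp: "0 < real_of_rat q" using q a0 b0 by (meson mult_nonneg_nonneg order.strict_trans1)
    obtain q1 where q1: "st C x < real_of_rat q1" "real_of_rat q1 * st C y < real_of_rat q"
    proof (cases "st C y = 0")
      case True
      obtain q1 where "st C x < real_of_rat q1" using of_rat_dense[of "st C x" "st C x + 1"] by auto
      then show ?thesis using that True qp by simp
    next
      case False
      then have bp: "0 < st C y" using b0 by simp
      have "st C x < real_of_rat q / st C y" using q bp by (simp add: less_divide_eq)
      then obtain q1 where "st C x < real_of_rat q1" "real_of_rat q1 < real_of_rat q / st C y"
        using of_rat_dense by blast
      then show ?thesis using that bp by (simp add: less_divide_eq)
    qed
    have q1p: "0 < q1" using q1(1) a0 by (metis order.strict_trans1 zero_less_of_rat_iff)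
    have "st C y < real_of_rat (q / q1)"
      using q1(2) q1p by (simp add: of_rat_divide less_divide_eq mult.commute)
    then have y2: "emb (q / q1) - y \<in> C" using st_gt_imp[OF assms(2)] by blast
    have x1: "emb q1 - x \<in> C" using st_gt_imp[OF assms(1) q1(1)] .
    have e1: "emb q1 \<in> C" using emb_nonneg q1p by simp
    have "emb q1 * (emb (q / q1) - y) + (emb q1 - x) * y \<in> C"
      using add mult x1 y2 e1 assms(4) by blast
    moreover have "emb q = (emb q1 * emb (q / q1) :: 'a)" using q1p emb_mult[of q1 "q / q1"] by simp
    ultimately show "emb q - x * y \<in> C" by (simp add: algebra_simps)
  qed
qed

lemma st_nat_mult: "bdd C y \<Longrightarrow> st C (of_nat n * y) = real n * st C y"
proof (induction n)
  case 0
  then show ?case using st_of_nat[of 0] by simp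
next
  case (Suc n)
  have "of_nat (Suc n) * y = y + of_nat n * y" by (simp add: algebra_simps)
  then show ?case using Suc st_add[of y "of_nat n * y"] bdd_mult[OF bdd_of_nat Suc.prems]
    by (simp add: algebra_simps)
qed

lemma st_mult:
  assumes "bdd C x" "bdd C y"
  shows "st C (x * y) = st C x * st C y"
proof -
  obtain n :: nat where n: "x + of_nat n \<in> C" using assms(1) unfolding bdd_def by blast
  obtain m :: nat where m: "y + of_nat m \<in> C" using assms(2) unfolding bdd_def by blast
  have bx: "bdd C (x + of_nat n)" and by': "bdd C (y + of_nat m)"
    using assms bdd_add bdd_of_nat by blast+
  have sx: "st C (x + of_nat n) = st C x + n" using st_add[OF assms(1) bdd_of_nat] st_of_nat by simp
  have sy: "st C (y + of_nat m) = st C y + m" using st_add[OF assms(2) bdd_of_nat] st_of_nat by simp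
  have e: "(x + of_nat n) * (y + of_nat m) = x * y + (of_nat n * y + (of_nat m * x + of_nat (n * m)))"
    by (simp add: algebra_simps)
  have b1: "bdd C (x * y)" "bdd C (of_nat n * y)" "bdd C (of_nat m * x)"
    using bdd_mult assms bdd_of_nat by blast+
  have "st C ((x + of_nat n) * (y + of_nat m)) = (st C x + n) * (st C y + m)"
    using st_mult_nonneg[OF bx by' n m] sx sy by simp
  moreover have "st C ((x + of_nat n) * (y + of_nat m)) = st C (x * y) + (st C (of_nat n * y) + (st C (of_nat m * x) + st C (of_nat (n * m))))"
    unfolding e using b1 bdd_of_nat bdd_add
    by (simp only: st_add b1 bdd_of_nat bdd_add)
  moreover have "st C (of_nat n * y) = n * st C y" "st C (of_nat m * x) = m * st C x" "st C (of_nat (n * m)) = n * m"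
    using st_nat_mult assms st_of_nat by (auto simp del: of_nat_mult)
  ultimately show ?thesis by (simp add: algebra_simps)
qed

end

definition Ext :: "'a::field set \<Rightarrow> 'a \<Rightarrow> 'a set" where
  "Ext M a = {m + a * n | m n. m \<in> M \<and> n \<in> M}"

context pc
begin

lemma ExtI: "m \<in> C \<Longrightarrow> n \<in> C \<Longrightarrow> x = m + a * n \<Longrightarrow> x \<in> Ext C a"
  unfolding Ext_def by blast

lemma Ext_sub: "C \<subseteq> Ext C a"
proof
  fix x assume "x \<in> C" then show "x \<in> Ext C a" using ExtI[of x 0] zero by simp
qed

lemma Ext_a: "a \<in> Ext C a"
  using ExtI[of 0 1 a] zero one by simp

lemma Ext_cone: assumes "-1 \<notin> Ext C a" shows "pcone (Ext C a)"
  unfolding pcone_def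
proof (intro conjI ballI allI)
  fix x y assume "x \<in> Ext C a" "y \<in> Ext C a"
  then obtain m1 n1 m2 n2 where h: "x = m1 + a * n1" "y = m2 + a * n2" "m1 \<in> C" "n1 \<in> C" "m2 \<in> C" "n2 \<in> C"
    unfolding Ext_def by blast
  have "x + y = (m1 + m2) + a * (n1 + n2)" using h by (simp add: algebra_simps)
  then show "x + y \<in> Ext C a" by (rule ExtI[OF add[OF h(3,5)] add[OF h(4,6)]])
  have "x * y = (m1 * m2 + (a * a) * (n1 * n2)) + a * (m1 * n2 + n1 * m2)" using h by (simp add: algebra_simps)
  moreover have "m1 * m2 + (a * a) * (n1 * n2) \<in> C" by (rule add[OF mult[OF h(3,5)] mult[OF sq mult[OF h(4,6)]]])
  moreover have "m1 * n2 + n1 * m2 \<in> C" by (rule add[OF mult[OF h(3,6)] mult[OF h(4,5)]])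
  ultimately show "x * y \<in> Ext C a" by (intro ExtI)
next
  fix x show "x * x \<in> Ext C a" using Ext_sub sq by (rule subsetD)
next
  show "-1 \<notin> Ext C a" by fact
qed

lemma Ext_both: "\<not> (-1 \<in> Ext C a \<and> -1 \<in> Ext C (-a))"
proof
  assume "-1 \<in> Ext C a \<and> -1 \<in> Ext C (-a)"
  then obtain m1 n1 m2 n2 where h: "-1 = m1 + a * n1" "-1 = m2 + (-a) * n2" "m1 \<in> C" "n1 \<in> C" "m2 \<in> C" "n2 \<in> C"
    unfolding Ext_def by blast
  have u1: "1 + m1 \<noteq> 0"
  proof
    assume "1 + m1 = 0" then have "m1 = -1" by (simp add: add_eq_0_iff)
    then show False using h(3) m1 by simp
  qed
  have u2: "1 + m2 \<noteq> 0"
  proof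
    assume "1 + m2 = 0" then have "m2 = -1" by (simp add: add_eq_0_iff)
    then show False using h(5) m1 by simp
  qed
  define u where "u = (1 + m1) * (1 + m2)"
  have u0: "u \<noteq> 0" unfolding u_def using u1 u2 by simp
  have uC: "u \<in> C" unfolding u_def by (rule mult[OF add[OF one h(3)] add[OF one h(5)]])
  have "(a * a) * (n1 * n2) = - u"
  proof -
    have "a * n1 = -(1 + m1)" using h(1) by (simp add: algebra_simps)
    moreover have "a * n2 = 1 + m2" using h(2) by (simp add: algebra_simps)
    ultimately have "(a * n1) * (a * n2) = (-(1 + m1)) * (1 + m2)" by simp
    then show ?thesis unfolding u_def by (simp add: algebra_simps)
  qed
  then have "(a * a) * (n1 * n2) * inverse u = -1" using u0 by simp
  moreover have "(a * a) * (n1 * n2) * inverse u \<in> C" by (rule mult[OF mult[OF sq mult[OF h(4,6)]] inv[OF uC]])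
  ultimately show False using m1 by simp
qed

lemma bdd_mono: "C \<subseteq> D \<Longrightarrow> bdd C x \<Longrightarrow> bdd D x"
  unfolding bdd_def by blast

end

locale pof = fixes le :: "'a::field \<Rightarrow> 'a \<Rightarrow> bool"
  assumes pf: "po_field le" and ar: "archimedean_po le"
begin

abbreviation P where "P \<equiv> {x. le 0 x}"

lemma le_refl: "le x x" and le_antisym: "le x y \<Longrightarrow> le y x \<Longrightarrow> x = y"
  and le_trans: "le x y \<Longrightarrow> le y z \<Longrightarrow> le x z" and le_add: "le r s \<Longrightarrow> le (r + t) (s + t)"
  and le_mult: "le 0 a \<Longrightarrow> le 0 b \<Longrightarrow> le 0 (a * b)" and le_sq: "le 0 (a * a)"
  using pf unfolding po_field_def po_comm_ring_def by blast+

lemma le_iff: "le x y \<longleftrightarrow> y - x \<in> P"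
proof
  assume "le x y" then show "y - x \<in> P" using le_add[of x y "-x"] by simp
next
  assume "y - x \<in> P" then show "le x y" using le_add[of 0 "y - x" x] by simp
qed

sublocale pc P
proof
  show "pcone P" unfolding pcone_def
  proof (intro conjI ballI allI)
    fix x y assume "x \<in> P" "y \<in> P"
    then show "x + y \<in> P" using le_add[of 0 x y] le_trans[of 0 y "x + y"] by simp
    show "x * y \<in> P" using le_mult \<open>x \<in> P\<close> \<open>y \<in> P\<close> by simp
  next
    fix x show "x * x \<in> P" using le_sq by simp
  next
    show "-1 \<notin> P"
    proof
      assume "-1 \<in> P"
      then have "le 1 0" using le_add[of 0 "-1" 1] by simp
      moreover have "le 0 1" using le_sq[of 1] by simp
      ultimately show False using le_antisym by fastforce
    qed
  qed
qed

lemma arch: "(\<And>k::nat. k \<ge> 1 \<Longrightarrow> of_nat k * g + h \<in> P) \<Longrightarrow> g \<in> P"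
  using ar unfolding archimedean_po_def by blast

lemma s_props: assumes "s - 1 \<in> P" shows "s \<in> P" "s \<noteq> 0" "inverse s \<in> P"
proof -
  show "s \<in> P" using add[OF assms one] by simp
  then show "inverse s \<in> P" using inv by blast
  show "s \<noteq> 0" using assms m1 by auto
qed

lemma mult_s_iff: assumes "s - 1 \<in> P" shows "x * s \<in> P \<longleftrightarrow> x \<in> P"
proof
  assume "x * s \<in> P"
  then have "x * s * inverse s \<in> P" using mult s_props[OF assms] by blast
  moreover have "x * s * inverse s = x" using s_props(2)[OF assms] by (simp add: mult.assoc)
  ultimately show "x \<in> P" by simp
next
  assume "x \<in> P" then show "x * s \<in> P" using mult s_props[OF assms] by blast
qed

lemma Loc_iff: "s \<in> Loc le \<longleftrightarrow> s - 1 \<in> P"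
proof
  assume "s \<in> Loc le" then show "s - 1 \<in> P" unfolding Loc_def by simp
next
  assume a: "s - 1 \<in> P"
  then show "s \<in> Loc le" unfolding Loc_def using mult_s_iff[OF a] by simp
qed

lemma Loc_bd_iff: "(a, s) \<in> Loc_bd le \<longleftrightarrow> s - 1 \<in> P \<and> bdd P (a / s)"
proof (cases "s - 1 \<in> P")
  case True
  note sp = s_props[OF True]
  have e1: "le (- of_nat n * s) (a * 1) \<longleftrightarrow> a / s + of_nat n \<in> P" for n
  proof -
    have "le (- of_nat n * s) (a * 1) \<longleftrightarrow> a * 1 - (- of_nat n * s) \<in> P" by (rule le_iff)
    also have "a * 1 - (- of_nat n * s) = (a / s + of_nat n) * s" using sp(2) by (simp add: field_simps)
    finally show ?thesis using mult_s_iff[OF True] by simp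
  qed
  have e2: "le (a * 1) (of_nat n * s) \<longleftrightarrow> of_nat n - a / s \<in> P" for n
  proof -
    have "le (a * 1) (of_nat n * s) \<longleftrightarrow> of_nat n * s - a * 1 \<in> P" by (rule le_iff)
    also have "of_nat n * s - a * 1 = (of_nat n - a / s) * s" using sp(2) by (simp add: field_simps)
    finally show ?thesis using mult_s_iff[OF True] by simp
  qed
  show ?thesis unfolding Loc_bd_def loc_le_def bdd_def using True e1 e2 by (simp add: Loc_iff)
next
  case False
  then show ?thesis unfolding Loc_bd_def by (simp add: Loc_iff)
qed

lemma Loc_bd_1: "(x, 1) \<in> Loc_bd le \<longleftrightarrow> bdd P x"
  using Loc_bd_iff zero by simp

lemma Loc_bd_E: assumes "a \<in> Loc_bd le" shows "snd a - 1 \<in> P" "snd a \<noteq> 0" "bdd P (fst a / snd a)"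
  using assms Loc_bd_iff[of "fst a" "snd a"] s_props by auto

lemma Loc_mult: "s - 1 \<in> P \<Longrightarrow> t - 1 \<in> P \<Longrightarrow> s * t - 1 \<in> P"
proof -
  assume "s - 1 \<in> P" "t - 1 \<in> P"
  moreover have "s * t - 1 = (s - 1) * (t - 1) + ((s - 1) + (t - 1))" by (simp add: algebra_simps)
  ultimately show ?thesis using add mult by metis
qed

lemma Loc_bd_add: assumes "a \<in> Loc_bd le" "b \<in> Loc_bd le"
  shows "loc_add a b \<in> Loc_bd le" "fst (loc_add a b) / snd (loc_add a b) = fst a / snd a + fst b / snd b"
proof -
  note A = Loc_bd_E[OF assms(1)] and B = Loc_bd_E[OF assms(2)]
  show e: "fst (loc_add a b) / snd (loc_add a b) = fst a / snd a + fst b / snd b"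
    unfolding loc_add_def using A(2) B(2) by (simp add: field_simps)
  show "loc_add a b \<in> Loc_bd le"
    using Loc_bd_iff[of "fst (loc_add a b)" "snd (loc_add a b)"] e Loc_mult[OF A(1) B(1)] bdd_add[OF A(3) B(3)]
    by (simp add: loc_add_def)
qed

lemma Loc_bd_mult: assumes "a \<in> Loc_bd le" "b \<in> Loc_bd le"
  shows "loc_mult a b \<in> Loc_bd le" "fst (loc_mult a b) / snd (loc_mult a b) = (fst a / snd a) * (fst b / snd b)"
proof -
  note A = Loc_bd_E[OF assms(1)] and B = Loc_bd_E[OF assms(2)]
  show e: "fst (loc_mult a b) / snd (loc_mult a b) = (fst a / snd a) * (fst b / snd b)"
    unfolding loc_mult_def using A(2) B(2) by (simp add: field_simps)
  show "loc_mult a b \<in> Loc_bd le"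
    using Loc_bd_iff[of "fst (loc_mult a b)" "snd (loc_mult a b)"] e Loc_mult[OF A(1) B(1)] bdd_mult[OF A(3) B(3)]
    by (simp add: loc_mult_def)
qed

lemma localizable: "localizable le"
  unfolding localizable_def
proof
  fix r :: 'a
  define s where "s = 1 + r * r"
  have h: "inverse 2 \<in> P" using inv[OF of_nat[of 2]] by simp
  have two: "(2::'a) \<noteq> 0" using of_nat_nz[of 2] by simp
  have e1: "s - r = inverse 2 * ((1 - r) * (1 - r) + (1 + r * r))"
    unfolding s_def using two by (simp add: field_simps)
  have m1': "inverse 2 * ((1 - r) * (1 - r) + (1 + r * r)) \<in> P"
    by (rule mult[OF h add[OF sq add[OF one sq]]])
  have 1: "s - r \<in> P" by (subst e1) (rule m1')
  have e2: "s + r = inverse 2 * ((1 + r) * (1 + r) + (1 + r * r))"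
    unfolding s_def using two by (simp add: field_simps)
  have m2': "inverse 2 * ((1 + r) * (1 + r) + (1 + r * r)) \<in> P"
    by (rule mult[OF h add[OF sq add[OF one sq]]])
  have 2: "s + r \<in> P" by (subst e2) (rule m2')
  have "s \<in> Loc le" unfolding Loc_iff s_def using sq by simp
  moreover have "le (- s) r" using le_iff[of "- s" r] 2 by (simp add: algebra_simps)
  moreover have "le r s" using le_iff[of r s] 1 by simp
  ultimately show "\<exists>s\<in>Loc le. le (- s) r \<and> le r s" by blast
qed

end

lemma chain_cone:
  assumes "\<CC> \<noteq> {}" "\<forall>X\<in>\<CC>. pcone X" "\<forall>X\<in>\<CC>. \<forall>Y\<in>\<CC>. X \<subseteq> Y \<or> Y \<subseteq> X"
  shows "pcone (\<Union>\<CC>)"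
  unfolding pcone_def
proof (intro conjI ballI allI)
  fix x y assume "x \<in> \<Union>\<CC>" "y \<in> \<Union>\<CC>"
  then obtain X Y where XY: "X \<in> \<CC>" "Y \<in> \<CC>" "x \<in> X" "y \<in> Y" by blast
  then have "(x \<in> X \<and> y \<in> X \<and> X \<in> \<CC>) \<or> (x \<in> Y \<and> y \<in> Y \<and> Y \<in> \<CC>)" using assms(3) by blast
  then obtain Z where Z: "Z \<in> \<CC>" "x \<in> Z" "y \<in> Z" by blast
  have "pcone Z" using assms(2) Z(1) by blast
  then have "x + y \<in> Z" "x * y \<in> Z" using Z unfolding pcone_def by blast+
  then show "x + y \<in> \<Union>\<CC>" "x * y \<in> \<Union>\<CC>" using Z(1) by blast+
next
  fix x
  obtain Z where Z: "Z \<in> \<CC>" using assms(1) by blast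
  then have "x * x \<in> Z" using assms(2) unfolding pcone_def by blast
  then show "x * x \<in> \<Union>\<CC>" using Z by blast
next
  show "-1 \<notin> \<Union>\<CC>" using assms(2) unfolding pcone_def by blast
qed

context pof
begin

lemma K_props:
  assumes "\<phi> \<in> Kset le"
  shows "\<And>a. a \<notin> Loc_bd le \<Longrightarrow> \<phi> a = undefined"
    and "\<And>a b. a \<in> Loc_bd le \<Longrightarrow> b \<in> Loc_bd le \<Longrightarrow> loc_eq a b \<Longrightarrow> \<phi> a = \<phi> b"
    and "\<And>a b. a \<in> Loc_bd le \<Longrightarrow> b \<in> Loc_bd le \<Longrightarrow> \<phi> (loc_add a b) = \<phi> a + \<phi> b"
    and "\<And>a b. a \<in> Loc_bd le \<Longrightarrow> b \<in> Loc_bd le \<Longrightarrow> \<phi> (loc_mult a b) = \<phi> a * \<phi> b"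
    and "\<phi> (1, 1) = 1"
    and "\<And>a. a \<in> Loc_bd le \<Longrightarrow> loc_le le (0, 1) a \<Longrightarrow> \<phi> a \<ge> 0"
  using assms unfolding Kset_def by (auto simp: PiE_def extensional_def)

lemma phi_frac: assumes "\<phi> \<in> Kset le" "a \<in> Loc_bd le" shows "\<phi> a = \<phi> (fst a / snd a, 1)"
proof -
  note E = Loc_bd_E[OF assms(2)]
  have "(fst a / snd a, 1) \<in> Loc_bd le" using Loc_bd_1 E by simp
  moreover have "loc_eq a (fst a / snd a, 1)" unfolding loc_eq_def using E(2) by simp
  ultimately show ?thesis using K_props(2)[OF assms(1) assms(2)] by blast
qed

lemma psi_add: assumes "\<phi> \<in> Kset le" "bdd P x" "bdd P y" shows "\<phi> (x + y, 1) = \<phi> (x, 1) + \<phi> (y, 1)"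
  using K_props(3)[OF assms(1), of "(x, 1)" "(y, 1)"] assms Loc_bd_1 by (simp add: loc_add_def)

lemma psi_mult: assumes "\<phi> \<in> Kset le" "bdd P x" "bdd P y" shows "\<phi> (x * y, 1) = \<phi> (x, 1) * \<phi> (y, 1)"
  using K_props(4)[OF assms(1), of "(x, 1)" "(y, 1)"] assms Loc_bd_1 by (simp add: loc_mult_def)

lemma psi_pos: assumes "\<phi> \<in> Kset le" "bdd P x" "x \<in> P" shows "\<phi> (x, 1) \<ge> 0"
  using K_props(6)[OF assms(1), of "(x, 1)"] assms Loc_bd_1 by (simp add: loc_le_def)

lemma bdd_0: "bdd P 0" using bdd_of_nat[of 0] by simp
lemma bdd_1: "bdd P 1" using bdd_of_nat[of 1] by simp

lemma psi_zero: assumes "\<phi> \<in> Kset le" shows "\<phi> (0, 1) = 0"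
  using psi_add[OF assms bdd_0 bdd_0] by simp

lemma psi_neg: assumes "\<phi> \<in> Kset le" "bdd P x" shows "\<phi> (- x, 1) = - \<phi> (x, 1)"
  using psi_add[OF assms bdd_neg[OF assms(2)]] psi_zero[OF assms(1)] by simp

lemma psi_diff: assumes "\<phi> \<in> Kset le" "bdd P x" "bdd P y" shows "\<phi> (x - y, 1) = \<phi> (x, 1) - \<phi> (y, 1)"
  using psi_add[OF assms(1,2) bdd_neg[OF assms(3)]] psi_neg[OF assms(1,3)] by simp

lemma psi_nat: assumes "\<phi> \<in> Kset le" shows "\<phi> (of_nat n, 1) = real n"
proof (induction n)
  case 0 then show ?case using psi_zero[OF assms] by simp
next
  case (Suc n)
  have "\<phi> (of_nat (Suc n), 1) = \<phi> (1 + of_nat n, 1)" by simp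
  also have "\<dots> = \<phi> (1, 1) + \<phi> (of_nat n, 1)" by (rule psi_add[OF assms bdd_1 bdd_of_nat])
  finally show ?case using Suc K_props(5)[OF assms] by simp
qed

lemma bdd_of_int: "bdd P (of_int p)"
  using bdd_emb[of "of_int p"] by (simp add: emb_of_int)

lemma psi_int: assumes "\<phi> \<in> Kset le" shows "\<phi> (of_int p, 1) = real_of_int p"
proof (cases "p \<ge> 0")
  case True
  then show ?thesis using psi_nat[OF assms, of "nat p"] by simp
next
  case False
  then have "of_int p = - (of_nat (nat (- p)) :: 'a)" by simp
  then show ?thesis using psi_neg[OF assms bdd_of_nat, of "nat (-p)"] psi_nat[OF assms, of "nat (-p)"] False
    by simp
qed

lemma psi_emb: assumes "\<phi> \<in> Kset le" shows "\<phi> (emb q, 1) = real_of_rat q"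
proof -
  obtain p d where pd: "d > 0" "q = of_int p / of_int d" by (rule rat_frac)
  have e: "emb q = (of_int p / of_int d :: 'a)" using emb_frac[OF _ pd(2)] pd(1) by simp
  have "emb q * of_int d = (of_int p :: 'a)" using e of_int_nz[of d] pd(1) by simp
  then have "\<phi> (emb q, 1) * real_of_int d = real_of_int p"
    using psi_mult[OF assms bdd_emb bdd_of_int, of q d] psi_int[OF assms] by simp
  moreover have "real_of_rat q = real_of_int p / real_of_int d" using pd by (simp add: of_rat_divide)
  ultimately have "real_of_int d * \<phi> (emb q, 1) = real_of_int d * real_of_rat q" using pd(1)
    by (simp add: field_simps)
  then show ?thesis using pd(1) by simp
qed

lemma bdd_sum: "finite J \<Longrightarrow> (\<And>j. j \<in> J \<Longrightarrow> bdd P (f j)) \<Longrightarrow> bdd P (sum f J)"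
  by (induction J rule: finite_induct) (auto simp: bdd_0 bdd_add)

lemma psi_sum: assumes "\<phi> \<in> Kset le" "finite J" "\<And>j. j \<in> J \<Longrightarrow> bdd P (f j)"
  shows "\<phi> (sum f J, 1) = (\<Sum>j\<in>J. \<phi> (f j, 1))"
  using assms(2,3)
proof (induction J rule: finite_induct)
  case empty then show ?case using psi_zero[OF assms(1)] by simp
next
  case (insert j J)
  then show ?case using psi_add[OF assms(1), of "f j" "sum f J"] bdd_sum[of J f] by simp
qed

lemma core:
  assumes bx: "bdd P x" and pos: "\<forall>\<phi>\<in>Kset le. 0 \<le> \<phi> (x, 1)"
  shows "x \<in> P"
proof (rule ccontr)
  assume nx: "x \<notin> P"
  obtain k :: nat where k: "k \<ge> 1" "of_nat k * x + 1 \<notin> P"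
    using arch[of x 1] nx by blast
  define c where "c = of_nat k * x + 1"
  define A where "A = {M. pcone M \<and> P \<subseteq> M \<and> -c \<in> M}"
  have nE: "-1 \<notin> Ext P (-c)"
  proof
    assume "-1 \<in> Ext P (-c)"
    then obtain m n where mn: "m \<in> P" "n \<in> P" "-1 = m + (-c) * n" unfolding Ext_def by blast
    show False
    proof (cases "n = 0")
      case True then show False using mn m1 by simp
    next
      case False
      have "c * n = 1 + m" using mn(3) by (simp add: algebra_simps)
      then have "c = (1 + m) * inverse n" using False by (simp add: field_simps)
      moreover have "(1 + m) * inverse n \<in> P" by (rule mult[OF add[OF one mn(1)] inv[OF mn(2)]])
      ultimately show False using k(2) c_def by simp
    qed
  qed
  have A0: "Ext P (-c) \<in> A" unfolding A_def using Ext_cone[OF nE] Ext_sub Ext_a by blast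
  have "\<exists>M\<in>A. \<forall>X\<in>A. M \<subseteq> X \<longrightarrow> X = M"
  proof (rule subset_Zorn_nonempty)
    show "A \<noteq> {}" using A0 by blast
  next
    fix \<CC> assume ch: "\<CC> \<noteq> {}" "subset.chain A \<CC>"
    then have ch': "\<CC> \<subseteq> A" "\<forall>X\<in>\<CC>. \<forall>Y\<in>\<CC>. X \<subseteq> Y \<or> Y \<subseteq> X" unfolding subset_chain_def by auto
    have "pcone (\<Union>\<CC>)" using chain_cone[OF ch(1) _ ch'(2)] ch'(1) unfolding A_def by blast
    moreover obtain Z where "Z \<in> \<CC>" using ch(1) by blast
    ultimately show "\<Union>\<CC> \<in> A" using ch'(1) unfolding A_def by blast
  qed
  then obtain M where MA: "M \<in> A" and Mmax: "\<forall>X\<in>A. M \<subseteq> X \<longrightarrow> X = M" by blast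
  have Mc: "pcone M" "P \<subseteq> M" "-c \<in> M" using MA unfolding A_def by auto
  interpret M: pc M by (rule pc.intro) (rule Mc(1))
  have Mtot: "y \<in> M \<or> - y \<in> M" for y
  proof (rule ccontr)
    assume ny: "\<not> (y \<in> M \<or> - y \<in> M)"
    have "\<exists>b. (b = y \<or> b = -y) \<and> -1 \<notin> Ext M b" using M.Ext_both[of y] by blast
    then obtain b where b: "b = y \<or> b = -y" "-1 \<notin> Ext M b" by blast
    have "Ext M b \<in> A" unfolding A_def using M.Ext_cone[OF b(2)] M.Ext_sub[of b] Mc by blast
    then have "Ext M b = M" using Mmax M.Ext_sub by blast
    then have "b \<in> M" using M.Ext_a by metis
    then show False using b(1) ny by blast
  qed
  interpret M: tc M by (rule tc.intro, rule pc.intro, rule Mc(1), unfold_locales, rule Mtot)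
  have bM: "bdd P z \<Longrightarrow> bdd M z" for z using bdd_mono[OF Mc(2)] by blast
  define \<phi> where "\<phi> = (\<lambda>a. if a \<in> Loc_bd le then st M (fst a / snd a) else undefined)"
  have "\<phi> \<in> Kset le"
    unfolding Kset_def
  proof (intro CollectI conjI ballI impI)
    show "\<phi> \<in> Loc_bd le \<rightarrow>\<^sub>E UNIV" unfolding \<phi>_def by auto
  next
    fix a b assume ab: "a \<in> Loc_bd le" "b \<in> Loc_bd le"
    note A = Loc_bd_E[OF ab(1)] and B = Loc_bd_E[OF ab(2)]
    {
      assume "loc_eq a b"
      then have "fst a / snd a = fst b / snd b" unfolding loc_eq_def using A(2) B(2)
        by (simp add: frac_eq_eq)
      then show "\<phi> a = \<phi> b" unfolding \<phi>_def using ab by simp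
    }
    show "\<phi> (loc_add a b) = \<phi> a + \<phi> b"
      unfolding \<phi>_def using ab Loc_bd_add[OF ab] M.st_add[OF bM[OF A(3)] bM[OF B(3)]] by simp
    show "\<phi> (loc_mult a b) = \<phi> a * \<phi> b"
      unfolding \<phi>_def using ab Loc_bd_mult[OF ab] M.st_mult[OF bM[OF A(3)] bM[OF B(3)]] by simp
  next
    show "\<phi> (1, 1) = 1" unfolding \<phi>_def using Loc_bd_1 bdd_1 M.st_of_nat[of 1] by simp
  next
    fix a assume a: "a \<in> Loc_bd le" "loc_le le (0, 1) a"
    note A = Loc_bd_E[OF a(1)]
    have "fst a \<in> P" using a(2) unfolding loc_le_def by simp
    then have "fst a * inverse (snd a) \<in> P" using mult inv s_props(1)[OF A(1)] by blast
    then have "fst a / snd a \<in> M" using Mc(2) by (auto simp: divide_inverse)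
    then show "\<phi> a \<ge> 0" unfolding \<phi>_def using a(1) M.st_nonneg[OF bM[OF A(3)]] by simp
  qed
  moreover have "\<phi> (x, 1) < 0"
  proof -
    have kinv: "emb (1 / of_nat k) * (of_nat k :: 'a) = 1"
      using emb_mult[of "1 / of_nat k" "of_nat k"] k(1) by (simp add: emb_of_nat emb_1)
    have "emb (1 / of_nat k) * (- c) \<in> M" using M.mult[OF M.emb_nonneg Mc(3)] by simp
    moreover have "emb (1 / of_nat k) * (- c) = emb (- (1 / of_nat k)) - x"
      unfolding c_def using kinv by (simp add: algebra_simps emb_minus)
    ultimately have "emb (- (1 / of_nat k)) - x \<in> M" by simp
    then have "st M x \<le> real_of_rat (- (1 / of_nat k))" using M.st_le[OF bM[OF bx]] by blast
    moreover have "real_of_rat (- (1 / of_nat k)) < 0" using k(1) by (simp add: of_rat_minus of_rat_divide)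
    ultimately have "st M x < 0" by linarith
    then show ?thesis unfolding \<phi>_def using Loc_bd_1 bx by simp
  qed
  ultimately show False using pos by force
qed

end

lemma dense_open_Int: "dense_open X U \<Longrightarrow> dense_open X V \<Longrightarrow> dense_open X (U \<inter> V)"
  unfolding dense_open_def dense_intersects_open
proof (intro conjI allI impI)
  assume a: "openin X U \<and> (\<forall>T. openin X T \<and> T \<noteq> {} \<longrightarrow> U \<inter> T \<noteq> {})"
     "openin X V \<and> (\<forall>T. openin X T \<and> T \<noteq> {} \<longrightarrow> V \<inter> T \<noteq> {})"
  show "openin X (U \<inter> V)" using a by blast
  fix T assume T: "openin X T \<and> T \<noteq> {}"
  then have "openin X (V \<inter> T) \<and> V \<inter> T \<noteq> {}" using a by blast
  then have "U \<inter> (V \<inter> T) \<noteq> {}" using a by blast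
  then show "U \<inter> V \<inter> T \<noteq> {}" by (simp add: Int_assoc)
qed

context pof
begin

lemma topspace_K: "topspace (Ktop le) = Kset le"
proof -
  have "Kset le \<subseteq> Loc_bd le \<rightarrow>\<^sub>E UNIV" unfolding Kset_def by blast
  then show ?thesis unfolding Ktop_def by auto
qed

lemma cont_eval: "j \<in> Loc_bd le \<Longrightarrow> continuous_map (Ktop le) euclideanreal (\<lambda>\<phi>. \<phi> j)"
  unfolding Ktop_def
  by (rule continuous_map_from_subtopology) (rule continuous_map_product_projection)

lemma bdd_inv_s: assumes "s - 1 \<in> P" shows "bdd P (inverse s)"
proof -
  note sp = s_props[OF assms]
  have "inverse s + of_nat 1 \<in> P" using add[OF sp(3) one] by simp
  moreover have "of_nat 1 - inverse s = (s - 1) * inverse s" using sp(2) by (simp add: field_simps)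
  moreover have "(s - 1) * inverse s \<in> P" by (rule mult[OF assms sp(3)])
  ultimately show ?thesis unfolding bdd_def by metis
qed

lemma one_s_bd: "s - 1 \<in> P \<Longrightarrow> (1, s) \<in> Loc_bd le"
  using Loc_bd_iff bdd_inv_s by (simp add: divide_inverse)

lemma phi_one_s: assumes "\<phi> \<in> Kset le" "s - 1 \<in> P" shows "\<phi> (1, s) = \<phi> (inverse s, 1)"
  using phi_frac[OF assms(1) one_s_bd[OF assms(2)]] by (simp add: divide_inverse)

lemma phi_one_s_nonneg: assumes "\<phi> \<in> Kset le" "s - 1 \<in> P" shows "\<phi> (1, s) \<ge> 0"
  using phi_one_s[OF assms] psi_pos[OF assms(1) bdd_inv_s[OF assms(2)] s_props(3)[OF assms(2)]] by simp

lemma open_O: assumes "s - 1 \<in> P" shows "openin (Ktop le) (O_fin le s)"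
proof -
  have "openin (Ktop le) {\<phi> \<in> topspace (Ktop le). \<phi> (1, s) \<in> {0<..}}"
    by (rule openin_continuous_map_preimage[OF cont_eval[OF one_s_bd[OF assms]]]) simp
  moreover have "{\<phi> \<in> topspace (Ktop le). \<phi> (1, s) \<in> {0<..}} = O_fin le s"
    unfolding O_fin_def topspace_K by auto
  ultimately show ?thesis by simp
qed

lemma dense_O: assumes sP: "s - 1 \<in> P" shows "dense_open (Ktop le) (O_fin le s)"
  unfolding dense_open_def dense_intersects_open
proof (intro conjI allI impI open_O[OF sP])
  fix G assume G: "openin (Ktop le) G \<and> G \<noteq> {}"
  show "O_fin le s \<inter> G \<noteq> {}"
  proof
    assume disj: "O_fin le s \<inter> G = {}"
    obtain \<phi>0 where p0: "\<phi>0 \<in> G" using G by blast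
    obtain T where T: "openin (product_topology (\<lambda>_. euclideanreal) (Loc_bd le)) T" "G = T \<inter> Kset le"
      using G unfolding Ktop_def openin_subtopology by blast
    have p0K: "\<phi>0 \<in> Kset le" using p0 T by blast
    obtain U where U: "finite {i \<in> Loc_bd le. U i \<noteq> UNIV}" "\<forall>i\<in>Loc_bd le. open (U i)"
        "\<phi>0 \<in> Pi\<^sub>E (Loc_bd le) U" "Pi\<^sub>E (Loc_bd le) U \<subseteq> T"
      using T(1) p0 T(2) unfolding openin_product_topology_alt by auto
    define J where "J = {i \<in> Loc_bd le. U i \<noteq> UNIV}"
    have fJ: "finite J" using U(1) unfolding J_def .
    have JL: "J \<subseteq> Loc_bd le" unfolding J_def by blast
    have "\<forall>i\<in>J. \<exists>e>0. ball (\<phi>0 i) e \<subseteq> U i"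
    proof
      fix i assume "i \<in> J"
      then have "open (U i)" "\<phi>0 i \<in> U i" using U(2,3) JL by (auto simp: PiE_iff)
      then show "\<exists>e>0. ball (\<phi>0 i) e \<subseteq> U i" using open_contains_ball by blast
    qed
    then obtain e where e: "\<And>i. i \<in> J \<Longrightarrow> e i > 0 \<and> ball (\<phi>0 i) (e i) \<subseteq> U i" by metis
    define \<epsilon> where "\<epsilon> = Min (insert 1 (e ` J))"
    have \<epsilon>0: "\<epsilon> > 0" unfolding \<epsilon>_def using fJ e by (subst Min_gr_iff) auto
    have \<epsilon>1: "\<epsilon> \<le> 1" unfolding \<epsilon>_def using fJ by (intro Min_le) auto
    have \<epsilon>e: "\<epsilon> \<le> e i" if "i \<in> J" for i unfolding \<epsilon>_def using fJ that by (intro Min_le) auto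
    obtain \<delta> :: rat where \<delta>: "0 < real_of_rat \<delta>" "real_of_rat \<delta> < (\<epsilon> / 2)\<^sup>2"
      using of_rat_dense[of 0 "(\<epsilon> / 2)\<^sup>2"] \<epsilon>0 by auto
    define N where "N = card J"
    define \<eta> where "\<eta> = min 1 (real_of_rat \<delta> / (N + 1))"
    have \<eta>0: "\<eta> > 0" unfolding \<eta>_def using \<delta>(1) by simp
    have "\<forall>i. \<exists>q. \<phi>0 i - \<eta> < real_of_rat q \<and> real_of_rat q < \<phi>0 i + \<eta>"
    proof
      fix i
      have "\<phi>0 i - \<eta> < \<phi>0 i + \<eta>" using \<eta>0 by simp
      then show "\<exists>q. \<phi>0 i - \<eta> < real_of_rat q \<and> real_of_rat q < \<phi>0 i + \<eta>" by (rule of_rat_dense)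
    qed
    then obtain c where c: "\<And>i. \<phi>0 i - \<eta> < real_of_rat (c i) \<and> real_of_rat (c i) < \<phi>0 i + \<eta>" by metis
    define a where "a i = fst i / snd i" for i :: "'a \<times> 'a"
    have ba: "bdd P (a i)" if "i \<in> J" for i unfolding a_def using Loc_bd_E(3) JL that by blast
    define g where "g = (\<Sum>i\<in>J. (a i - emb (c i)) * (a i - emb (c i)))"
    have bt: "bdd P ((a i - emb (c i)) * (a i - emb (c i)))" if "i \<in> J" for i
      by (intro bdd_mult bdd_diff ba[OF that] bdd_emb)
    have bg: "bdd P g" unfolding g_def using bdd_sum[OF fJ bt] .
    define val where "val \<phi> = (\<Sum>i\<in>J. (\<phi> i - real_of_rat (c i)) * (\<phi> i - real_of_rat (c i)))" for \<phi> :: "'a \<times> 'a \<Rightarrow> real"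
    have gval: "\<phi> (g, 1) = val \<phi>" if "\<phi> \<in> Kset le" for \<phi>
    proof -
      have "\<phi> (g, 1) = (\<Sum>i\<in>J. \<phi> ((a i - emb (c i)) * (a i - emb (c i)), 1))"
        unfolding g_def by (rule psi_sum[OF that fJ bt])
      also have "\<dots> = val \<phi>" unfolding val_def
      proof (rule sum.cong[OF refl])
        fix i assume i: "i \<in> J"
        have "\<phi> (a i, 1) = \<phi> i" unfolding a_def using phi_frac[OF that, of i] JL i by auto
        then show "\<phi> ((a i - emb (c i)) * (a i - emb (c i)), 1) = (\<phi> i - real_of_rat (c i)) * (\<phi> i - real_of_rat (c i))"
          using psi_mult[OF that bdd_diff[OF ba[OF i] bdd_emb] bdd_diff[OF ba[OF i] bdd_emb]]
            psi_diff[OF that ba[OF i] bdd_emb] psi_emb[OF that] by simp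
      qed
      finally show ?thesis .
    qed
    have claim1: "\<phi> \<in> G" if K: "\<phi> \<in> Kset le" and v: "val \<phi> < real_of_rat \<delta>" for \<phi>
    proof -
      have "\<phi> \<in> Pi\<^sub>E (Loc_bd le) U"
      proof (unfold PiE_iff, intro conjI ballI)
        show "\<phi> \<in> extensional (Loc_bd le)" using K_props(1)[OF K] by (auto simp: extensional_def)
        fix i assume i: "i \<in> Loc_bd le"
        show "\<phi> i \<in> U i"
        proof (cases "i \<in> J")
          case False then show ?thesis using i unfolding J_def by auto
        next
          case True
          have "(\<phi> i - real_of_rat (c i)) * (\<phi> i - real_of_rat (c i)) \<le> val \<phi>"
            unfolding val_def by (rule member_le_sum[OF True _ fJ]) simp
          then have "(\<phi> i - real_of_rat (c i)) * (\<phi> i - real_of_rat (c i)) < (\<epsilon> / 2) * (\<epsilon> / 2)"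
            using v \<delta>(2) by (simp add: power2_eq_square)
          then have d1: "\<bar>\<phi> i - real_of_rat (c i)\<bar> < \<epsilon> / 2"
          proof (rule contrapos_pp)
            assume "\<not> \<bar>\<phi> i - real_of_rat (c i)\<bar> < \<epsilon> / 2"
            then have "\<epsilon> / 2 \<le> \<bar>\<phi> i - real_of_rat (c i)\<bar>" by simp
            then have "(\<epsilon> / 2) * (\<epsilon> / 2) \<le> \<bar>\<phi> i - real_of_rat (c i)\<bar> * \<bar>\<phi> i - real_of_rat (c i)\<bar>"
              using \<epsilon>0 by (intro mult_mono) auto
            then show "\<not> (\<phi> i - real_of_rat (c i)) * (\<phi> i - real_of_rat (c i)) < (\<epsilon> / 2) * (\<epsilon> / 2)"
              by (simp add: abs_mult_self_eq)
          qed
          have "\<eta> \<le> real_of_rat \<delta>" unfolding \<eta>_def using \<delta>(1)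
            by (simp add: min.coboundedI2 divide_le_eq)
          moreover have "(\<epsilon> / 2)\<^sup>2 \<le> \<epsilon> / 2" using \<epsilon>0 \<epsilon>1 by (simp add: power2_eq_square mult_le_cancel_right1)
          ultimately have "\<eta> < \<epsilon> / 2" using \<delta>(2) by linarith
          then have "\<bar>\<phi>0 i - real_of_rat (c i)\<bar> < \<epsilon> / 2" using c[of i] by linarith
          then have "\<bar>\<phi> i - \<phi>0 i\<bar> < e i" using d1 \<epsilon>e[OF True] by linarith
          then have "\<phi> i \<in> ball (\<phi>0 i) (e i)" by (simp add: dist_real_def abs_minus_commute)
          then show ?thesis using e[OF True] by blast
        qed
      qed
      then show ?thesis using U(4) T(2) K by blast
    qed
    have claim2: "val \<phi>0 < real_of_rat \<delta>"
    proof -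
      have "val \<phi>0 \<le> (\<Sum>i\<in>J. real_of_rat \<delta> / (N + 1))" unfolding val_def
      proof (rule sum_mono)
        fix i assume "i \<in> J"
        have x: "\<bar>\<phi>0 i - real_of_rat (c i)\<bar> < \<eta>" using c[of i] by linarith
        have "\<eta> \<le> 1" "\<eta> \<le> real_of_rat \<delta> / (N + 1)" unfolding \<eta>_def by auto
        then have "\<bar>\<phi>0 i - real_of_rat (c i)\<bar> * \<bar>\<phi>0 i - real_of_rat (c i)\<bar> \<le> \<bar>\<phi>0 i - real_of_rat (c i)\<bar> * 1"
          using x by (intro mult_left_mono) auto
        then show "(\<phi>0 i - real_of_rat (c i)) * (\<phi>0 i - real_of_rat (c i)) \<le> real_of_rat \<delta> / (N + 1)"
          using x \<open>\<eta> \<le> real_of_rat \<delta> / (N + 1)\<close> by (simp add: abs_mult_self_eq)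
      qed
      also have "\<dots> = N * (real_of_rat \<delta> / (N + 1))" unfolding N_def by simp
      also have "\<dots> < real_of_rat \<delta>" using \<delta>(1) by (simp add: field_simps)
      finally show ?thesis .
    qed
    note sp = s_props[OF sP]
    define z where "z = inverse s * (g - emb \<delta>)"
    have bz: "bdd P z" unfolding z_def by (intro bdd_mult bdd_inv_s[OF sP] bdd_diff bg bdd_emb)
    have "\<forall>\<phi>\<in>Kset le. 0 \<le> \<phi> (z, 1)"
    proof
      fix \<phi> assume K: "\<phi> \<in> Kset le"
      have "\<phi> (z, 1) = \<phi> (inverse s, 1) * (val \<phi> - real_of_rat \<delta>)"
        unfolding z_def using psi_mult[OF K bdd_inv_s[OF sP] bdd_diff[OF bg bdd_emb]] psi_diff[OF K bg bdd_emb] psi_emb[OF K] gval[OF K]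
          by simp
      moreover have "\<phi> (inverse s, 1) \<ge> 0" using phi_one_s_nonneg[OF K sP] phi_one_s[OF K sP] by simp
      moreover have "\<phi> (inverse s, 1) = 0" if "val \<phi> < real_of_rat \<delta>"
      proof -
        have "\<phi> \<in> G" using claim1[OF K that] .
        then have "\<phi> \<notin> O_fin le s" using disj by blast
        then show ?thesis using K phi_one_s_nonneg[OF K sP] phi_one_s[OF K sP] unfolding O_fin_def by simp
      qed
      ultimately show "0 \<le> \<phi> (z, 1)" by (cases "val \<phi> < real_of_rat \<delta>") auto
    qed
    then have "z \<in> P" using core[OF bz] by blast
    then have "s * z \<in> P" using mult sp(1) by blast
    moreover have "s * z = g - emb \<delta>" unfolding z_def using sp(2) by simp
    ultimately have "0 \<le> \<phi>0 (g - emb \<delta>, 1)" using psi_pos[OF p0K bdd_diff[OF bg bdd_emb]]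
      by simp
    then have "0 \<le> val \<phi>0 - real_of_rat \<delta>" using psi_diff[OF p0K bg bdd_emb] psi_emb[OF p0K] gval[OF p0K] by simp
    then show False using claim2 by simp
  qed
qed

end

context pof
begin

definition sg :: "'a \<Rightarrow> 'a" where "sg r = (SOME s. s \<in> Loc le \<and> (r, s) \<in> Loc_bd le)"

lemma sg_ex: "\<exists>s. s \<in> Loc le \<and> (r, s) \<in> Loc_bd le"
proof -
  obtain s where s: "s \<in> Loc le" "le (- s) r" "le r s" using localizable unfolding localizable_def by blast
  have "(r, s) \<in> Loc_bd le" unfolding Loc_bd_def loc_le_def using s by (auto intro!: exI[of _ 1])
  then show ?thesis using s by blast
qed

lemma sg: "sg r - 1 \<in> P" "bdd P (r / sg r)" "(r, sg r) \<in> Loc_bd le"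
proof -
  have "sg r \<in> Loc le \<and> (r, sg r) \<in> Loc_bd le" unfolding sg_def by (rule someI_ex[OF sg_ex])
  then show "sg r - 1 \<in> P" "bdd P (r / sg r)" "(r, sg r) \<in> Loc_bd le" using Loc_iff Loc_bd_iff by auto
qed

lemma gelfand_eq: "gelfand le r = (O_fin le (sg r), \<lambda>\<phi>. inverse (\<phi> (1, sg r)) * \<phi> (r, sg r))"
  unfolding gelfand_def gelfand_rep_def sg_def ..

definition v :: "('a \<times> 'a \<Rightarrow> real) \<Rightarrow> 'a \<Rightarrow> 'a \<Rightarrow> real" where
  "v \<phi> r s = \<phi> (r / s, 1) / \<phi> (inverse s, 1)"

lemma gval: assumes "\<phi> \<in> Kset le" "s - 1 \<in> P" "bdd P (r / s)"
  shows "inverse (\<phi> (1, s)) * \<phi> (r, s) = v \<phi> r s"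
proof -
  have "(r, s) \<in> Loc_bd le" using Loc_bd_iff assms by simp
  then have "\<phi> (r, s) = \<phi> (r / s, 1)" using phi_frac[OF assms(1)] by simp
  then show ?thesis unfolding v_def using phi_one_s[OF assms(1,2)] by (simp add: divide_inverse mult.commute)
qed

lemma indep: assumes K: "\<phi> \<in> Kset le" and s: "s - 1 \<in> P" "s' - 1 \<in> P" and b: "bdd P (r / s)" "bdd P (r / s')"
  and nz: "\<phi> (inverse s, 1) \<noteq> 0" "\<phi> (inverse s', 1) \<noteq> 0"
  shows "v \<phi> r s = v \<phi> r s'"
proof -
  have "r / s * inverse s' = r / s' * inverse s" by (simp add: field_simps)
  then have "\<phi> (r / s, 1) * \<phi> (inverse s', 1) = \<phi> (r / s', 1) * \<phi> (inverse s, 1)"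
    using psi_mult[OF K b(1) bdd_inv_s[OF s(2)]] psi_mult[OF K b(2) bdd_inv_s[OF s(1)]] by simp
  then show ?thesis unfolding v_def using nz by (simp add: field_simps)
qed

lemma Opos: assumes "\<phi> \<in> O_fin le s" "s - 1 \<in> P" shows "\<phi> \<in> Kset le" "\<phi> (inverse s, 1) > 0"
  using assms phi_one_s[of \<phi> s] unfolding O_fin_def by auto

lemma inv3: assumes "s1 - 1 \<in> P" "s2 - 1 \<in> P" "s3 - 1 \<in> P"
  shows "s1 * s2 * s3 - 1 \<in> P" "inverse (s1 * s2 * s3) = inverse s1 * (inverse s2 * inverse s3)"
  using Loc_mult assms by (auto simp: field_simps)

lemma part_cae: "gelfand le r \<in> cae (Ktop le)"
proof -
  note S = sg[of r]
  have "continuous_map (subtopology (Ktop le) (O_fin le (sg r))) euclideanreal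
          (\<lambda>\<phi>. inverse (\<phi> (1, sg r)) * \<phi> (r, sg r))"
  proof (intro continuous_map_real_mult continuous_map_real_inverse continuous_map_from_subtopology cont_eval)
    show "(1, sg r) \<in> Loc_bd le" by (rule one_s_bd[OF S(1)])
    show "(r, sg r) \<in> Loc_bd le" by (rule S(3))
    fix \<phi> assume "\<phi> \<in> topspace (subtopology (Ktop le) (O_fin le (sg r)))"
    then show "\<phi> (1, sg r) \<noteq> 0" unfolding O_fin_def by auto
  qed
  then show ?thesis unfolding cae_def gelfand_eq using dense_O[OF S(1)] by simp
qed

lemma part_add: "cae_eq (Ktop le) (gelfand le (r + t)) (cae_add (gelfand le r) (gelfand le t))"
proof -
  define s1 where "s1 = sg r"
  define s2 where "s2 = sg t"
  define s3 where "s3 = sg (r + t)"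
  note s = sg[of r, folded s1_def] sg[of t, folded s2_def] sg[of "r + t", folded s3_def]
  define S where "S = s1 * s2 * s3"
  have SP: "S - 1 \<in> P" and iS: "inverse S = inverse s1 * (inverse s2 * inverse s3)"
    unfolding S_def using inv3 s by blast+
  have rS: "r / S = r / s1 * (inverse s2 * inverse s3)" unfolding iS divide_inverse S_def
    by (simp add: field_simps)
  have tS: "t / S = t / s2 * (inverse s1 * inverse s3)" unfolding iS divide_inverse S_def
    by (simp add: field_simps)
  have brS: "bdd P (r / S)" unfolding rS by (intro bdd_mult s bdd_inv_s)
  have btS: "bdd P (t / S)" unfolding tS by (intro bdd_mult s bdd_inv_s)
  have rtS: "(r + t) / S = r / S + t / S" by (simp add: add_divide_distrib)
  have brtS: "bdd P ((r + t) / S)" unfolding rtS by (intro bdd_add brS btS)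
  define W where "W = O_fin le s3 \<inter> (O_fin le s1 \<inter> O_fin le s2)"
  have "dense_open (Ktop le) W" unfolding W_def by (intro dense_open_Int dense_O s)
  moreover have "\<forall>\<phi>\<in>W. inverse (\<phi> (1, s3)) * \<phi> (r + t, s3) =
      inverse (\<phi> (1, s1)) * \<phi> (r, s1) + inverse (\<phi> (1, s2)) * \<phi> (t, s2)"
  proof
    fix \<phi> assume "\<phi> \<in> W"
    then have K: "\<phi> \<in> Kset le" and d1: "\<phi> (inverse s1, 1) > 0" and d2: "\<phi> (inverse s2, 1) > 0"
      and d3: "\<phi> (inverse s3, 1) > 0" unfolding W_def using Opos s by blast+
    have "\<phi> (inverse S, 1) = \<phi> (inverse s1, 1) * (\<phi> (inverse s2, 1) * \<phi> (inverse s3, 1))"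
      unfolding iS using psi_mult[OF K] bdd_inv_s s bdd_mult by metis
    then have dS: "\<phi> (inverse S, 1) \<noteq> 0" using d1 d2 d3 by simp
    have "inverse (\<phi> (1, s3)) * \<phi> (r + t, s3) = v \<phi> (r + t) s3" by (rule gval[OF K s(7,8)])
    also have "\<dots> = v \<phi> (r + t) S" using indep[OF K s(7) SP s(8) brtS] d3 dS by simp
    also have "\<dots> = v \<phi> r S + v \<phi> t S" unfolding v_def rtS psi_add[OF K brS btS] by (simp add: add_divide_distrib)
    also have "v \<phi> r S = v \<phi> r s1" using indep[OF K SP s(1) brS s(2)] d1 dS by simp
    also have "v \<phi> t S = v \<phi> t s2" using indep[OF K SP s(4) btS s(5)] d2 dS by simp
    finally show "inverse (\<phi> (1, s3)) * \<phi> (r + t, s3) =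
      inverse (\<phi> (1, s1)) * \<phi> (r, s1) + inverse (\<phi> (1, s2)) * \<phi> (t, s2)"
      using gval[OF K s(1,2)] gval[OF K s(4,5)] by simp
  qed
  ultimately show ?thesis unfolding cae_eq_def cae_add_def gelfand_eq s1_def[symmetric] s2_def[symmetric] s3_def[symmetric]
    by (intro exI[of _ W]) (auto simp: W_def)
qed

lemma part_mult: "cae_eq (Ktop le) (gelfand le (r * t)) (cae_mult (gelfand le r) (gelfand le t))"
proof -
  define s1 where "s1 = sg r"
  define s2 where "s2 = sg t"
  define s3 where "s3 = sg (r * t)"
  note s = sg[of r, folded s1_def] sg[of t, folded s2_def] sg[of "r * t", folded s3_def]
  define S where "S = s1 * s2 * s3"
  have SP: "S - 1 \<in> P" and iS: "inverse S = inverse s1 * (inverse s2 * inverse s3)"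
    unfolding S_def using inv3 s by blast+
  have SSP: "S * S - 1 \<in> P" using Loc_mult[OF SP SP] .
  have rS: "r / S = r / s1 * (inverse s2 * inverse s3)" unfolding iS divide_inverse S_def
    by (simp add: field_simps)
  have tS: "t / S = t / s2 * (inverse s1 * inverse s3)" unfolding iS divide_inverse S_def
    by (simp add: field_simps)
  have brS: "bdd P (r / S)" unfolding rS by (intro bdd_mult s bdd_inv_s)
  have btS: "bdd P (t / S)" unfolding tS by (intro bdd_mult s bdd_inv_s)
  have rtS: "(r * t) / (S * S) = (r / S) * (t / S)" by simp
  have brtS: "bdd P ((r * t) / (S * S))" unfolding rtS by (intro bdd_mult brS btS)
  define W where "W = O_fin le s3 \<inter> (O_fin le s1 \<inter> O_fin le s2)"
  have "dense_open (Ktop le) W" unfolding W_def by (intro dense_open_Int dense_O s)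
  moreover have "\<forall>\<phi>\<in>W. inverse (\<phi> (1, s3)) * \<phi> (r * t, s3) =
      inverse (\<phi> (1, s1)) * \<phi> (r, s1) * (inverse (\<phi> (1, s2)) * \<phi> (t, s2))"
  proof
    fix \<phi> assume "\<phi> \<in> W"
    then have K: "\<phi> \<in> Kset le" and d1: "\<phi> (inverse s1, 1) > 0" and d2: "\<phi> (inverse s2, 1) > 0"
      and d3: "\<phi> (inverse s3, 1) > 0" unfolding W_def using Opos s by blast+
    have "\<phi> (inverse S, 1) = \<phi> (inverse s1, 1) * (\<phi> (inverse s2, 1) * \<phi> (inverse s3, 1))"
      unfolding iS using psi_mult[OF K] bdd_inv_s s bdd_mult by metis
    then have dS: "\<phi> (inverse S, 1) \<noteq> 0" using d1 d2 d3 by simp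
    have dSS: "\<phi> (inverse (S * S), 1) = \<phi> (inverse S, 1) * \<phi> (inverse S, 1)"
      using psi_mult[OF K bdd_inv_s[OF SP] bdd_inv_s[OF SP]] by simp
    then have dSS0: "\<phi> (inverse (S * S), 1) \<noteq> 0" using dS by simp
    have "inverse (\<phi> (1, s3)) * \<phi> (r * t, s3) = v \<phi> (r * t) s3" by (rule gval[OF K s(7,8)])
    also have "\<dots> = v \<phi> (r * t) (S * S)" using indep[OF K s(7) SSP s(8) brtS] d3 dSS0 by simp
    also have "\<dots> = v \<phi> r S * v \<phi> t S" unfolding v_def rtS psi_mult[OF K brS btS] dSS by simp
    also have "v \<phi> r S = v \<phi> r s1" using indep[OF K SP s(1) brS s(2)] d1 dS by simp
    also have "v \<phi> t S = v \<phi> t s2" using indep[OF K SP s(4) btS s(5)] d2 dS by simp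
    finally show "inverse (\<phi> (1, s3)) * \<phi> (r * t, s3) =
      inverse (\<phi> (1, s1)) * \<phi> (r, s1) * (inverse (\<phi> (1, s2)) * \<phi> (t, s2))"
      using gval[OF K s(1,2)] gval[OF K s(4,5)] by simp
  qed
  ultimately show ?thesis unfolding cae_eq_def cae_mult_def gelfand_eq s1_def[symmetric] s2_def[symmetric] s3_def[symmetric]
    by (intro exI[of _ W]) (auto simp: W_def)
qed

lemma part_one: "cae_eq (Ktop le) (gelfand le 1) (cae_const (Ktop le) 1)"
proof -
  note s = sg[of 1]
  have "\<forall>\<phi>\<in>O_fin le (sg 1). inverse (\<phi> (1, sg 1)) * \<phi> (1, sg 1) = 1"
    unfolding O_fin_def by auto
  moreover have "O_fin le (sg 1) \<subseteq> topspace (Ktop le)" unfolding topspace_K O_fin_def by auto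
  ultimately show ?thesis unfolding cae_eq_def cae_const_def gelfand_eq using dense_O[OF s(1)]
    by (intro exI[of _ "O_fin le (sg 1)"]) auto
qed

lemma part_pos: assumes "le 0 r" shows "cae_le (Ktop le) (cae_const (Ktop le) 0) (gelfand le r)"
proof -
  note s = sg[of r]
  have "\<forall>\<phi>\<in>O_fin le (sg r). 0 \<le> inverse (\<phi> (1, sg r)) * \<phi> (r, sg r)"
  proof
    fix \<phi> assume "\<phi> \<in> O_fin le (sg r)"
    then have K: "\<phi> \<in> Kset le" and p: "\<phi> (1, sg r) > 0" unfolding O_fin_def by auto
    have "\<phi> (r, sg r) \<ge> 0" using K_props(6)[OF K s(3)] assms by (simp add: loc_le_def)
    then show "0 \<le> inverse (\<phi> (1, sg r)) * \<phi> (r, sg r)" using p by simp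
  qed
  moreover have "O_fin le (sg r) \<subseteq> topspace (Ktop le)" unfolding topspace_K O_fin_def by auto
  ultimately show ?thesis unfolding cae_le_def cae_const_def gelfand_eq using dense_O[OF s(1)]
    by (intro exI[of _ "O_fin le (sg r)"]) auto
qed

lemma part_emb: assumes "cae_le (Ktop le) (cae_const (Ktop le) 0) (gelfand le r)" shows "le 0 r"
proof -
  note s = sg[of r]
  obtain W where W: "dense_open (Ktop le) W" "W \<subseteq> O_fin le (sg r)"
    "\<forall>\<phi>\<in>W. 0 \<le> inverse (\<phi> (1, sg r)) * \<phi> (r, sg r)"
    using assms unfolding cae_le_def cae_const_def gelfand_eq by auto
  have Wpos: "\<phi> (r, sg r) \<ge> 0" if "\<phi> \<in> W" for \<phi>
  proof -
    have "\<phi> (1, sg r) > 0" using W(2) that unfolding O_fin_def by auto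
    moreover have "0 \<le> inverse (\<phi> (1, sg r)) * \<phi> (r, sg r)" using W(3) that by blast
    ultimately have "0 \<le> \<phi> (1, sg r) * (inverse (\<phi> (1, sg r)) * \<phi> (r, sg r))" by simp
    then show ?thesis using \<open>\<phi> (1, sg r) > 0\<close> by (simp add: mult.assoc[symmetric])
  qed
  have "\<forall>\<phi>\<in>Kset le. 0 \<le> \<phi> (r / sg r, 1)"
  proof
    fix \<phi> assume K: "\<phi> \<in> Kset le"
    show "0 \<le> \<phi> (r / sg r, 1)"
    proof (rule ccontr)
      assume neg: "\<not> 0 \<le> \<phi> (r / sg r, 1)"
      define G where "G = {\<psi> \<in> topspace (Ktop le). \<psi> (r, sg r) \<in> {..<0}}"
      have "openin (Ktop le) G" unfolding G_def
        by (rule openin_continuous_map_preimage[OF cont_eval[OF s(3)]]) simp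
      moreover have "\<phi> \<in> G" unfolding G_def topspace_K using K neg phi_frac[OF K s(3)] by simp
      ultimately have "W \<inter> G \<noteq> {}" using W(1) unfolding dense_open_def dense_intersects_open by blast
      then obtain \<psi> where "\<psi> \<in> W" "\<psi> \<in> G" by blast
      then show False using Wpos unfolding G_def by force
    qed
  qed
  then have "r / sg r \<in> P" using core[OF s(2)] by blast
  then have "r / sg r * sg r \<in> P" using mult s_props(1)[OF s(1)] by blast
  then show ?thesis using s_props(2)[OF s(1)] by simp
qed

end

theorem theorem39:
  fixes le :: "'a::field \<Rightarrow> 'a \<Rightarrow> bool"
  assumes "po_field le" and "archimedean_po le"
  shows "localizable le \<and>
    (\<forall>r. gelfand le r \<in> cae (Ktop le)) \<and>
    (\<forall>r t. cae_eq (Ktop le) (gelfand le (r + t)) (cae_add (gelfand le r) (gelfand le t))) \<and>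
    (\<forall>r t. cae_eq (Ktop le) (gelfand le (r * t)) (cae_mult (gelfand le r) (gelfand le t))) \<and>
    cae_eq (Ktop le) (gelfand le 1) (cae_const (Ktop le) 1) \<and>
    (\<forall>r. le 0 r \<longrightarrow> cae_le (Ktop le) (cae_const (Ktop le) 0) (gelfand le r)) \<and>
    (\<forall>r. cae_le (Ktop le) (cae_const (Ktop le) 0) (gelfand le r) \<longrightarrow> le 0 r)"
proof -
  interpret pof le by (rule pof.intro) fact+
  show ?thesis using localizable part_cae part_add part_mult part_one part_pos part_emb by blast
qed

end
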